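(* Let $d\colon A\to B$ be a homomorphism of finite abelian groups. Then the set of maximal elements of $\operatorname{Dec}_\mathcal{I}(d)$ equals one orbit of $\operatorname{Dec}_\mathcal{I}(d)$ under the action of $U^*(d)$.
   Context: A restriction of $d$ is a homomorphism $d'\colon A'\to B'$ with $A'\subset A$, $B'\subset B$ subgroups and $d'(a)=d(a)$ for $a\in A'$ (so $d(A')\subset B'$). $\operatorname{Dec}(d)$ is the set of pairs $(d_0,d_1)$ of restrictions $d_i\colon A_i\to B_i$ of $d$ with $A_0\oplus A_1=A$ and $B_0\oplus B_1=B$ (internal direct sums), partially ordered by $(d_0,d_1)\leq(d_0',d_1')$ iff there is a restriction $c\colon C\to D$ of $d$ with $A_0=A_0'\oplus C$, $B_0=B_0'\oplus D$, $A_1\oplus C=A_1'$, $B_1\oplus D=B_1'$. $\operatorname{Dec}_\mathcal{I}(d)$ is the subset of $(d_0,d_1)\in\operatorname{Dec}(d)$ with $d_1$ an isomorphism, with the induced order. $Q(d)=\mathbb{Z}\oplus\operatorname{Hom}(B,A)$ is the ring with multiplication $(m,f)\star(n,g)=(mn,mg+nf+f\circ d\circ g)$; $U(d)=1+\operatorname{Hom}(B,A)$ and $U^*(d)=U(d)\cap Q(d)^*$, a group. $U^*(d)$ acts on $d$ via the homomorphism $1+f\mapsto(\mathrm{id}_A+f\circ d,\ \mathrm{id}_B+d\circ f)$ into the group of pairs $(\alpha,\beta)\in\operatorname{Aut}(A)\times\operatorname{Aut}(B)$ with $\beta d=d\alpha$, and such a pair acts on $\operatorname{Dec}(d)$ by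 sending $(d_i\colon A_i\to B_i)_{i=0,1}$ to the restrictions $\alpha(A_i)\to\beta(B_i)$. *)

theory Defs
  imports Main
begin

text \<open>Finite abelian groups A, B are modelled as finite types of class ab_group_add.
 A restriction of d is determined by the pair of subgroups (A', B') with d(A') in B'.\<close>

definition is_hom :: "('x::ab_group_add \<Rightarrow> 'y::ab_group_add) \<Rightarrow> bool" where
  "is_hom h \<longleftrightarrow> (\<forall>x y. h (x + y) = h x + h y)"

definition subgrp :: "'x::ab_group_add set \<Rightarrow> bool" where
  "subgrp S \<longleftrightarrow> 0 \<in> S \<and> (\<forall>x\<in>S. \<forall>y\<in>S. x + y \<in> S) \<and> (\<forall>x\<in>S. - x \<in> S)"

definition is_restriction ::
  "('a::ab_group_add \<Rightarrow> 'b::ab_group_add) \<Rightarrow> 'a set \<times> 'b set \<Rightarrow> bool" where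
  "is_restriction d r \<longleftrightarrow> subgrp (fst r) \<and> subgrp (snd r) \<and> d ` fst r \<subseteq> snd r"

definition int_dsum :: "'x::ab_group_add set \<Rightarrow> 'x set \<Rightarrow> 'x set \<Rightarrow> bool" where
  "int_dsum X Y Z \<longleftrightarrow> X \<inter> Y = {0} \<and> {x + y | x y. x \<in> X \<and> y \<in> Y} = Z"

definition Dec ::
  "('a::ab_group_add \<Rightarrow> 'b::ab_group_add) \<Rightarrow> (('a set \<times> 'b set) \<times> ('a set \<times> 'b set)) set" where
  "Dec d = {((A0, B0), (A1, B1)). is_restriction d (A0, B0) \<and> is_restriction d (A1, B1)
            \<and> int_dsum A0 A1 UNIV \<and> int_dsum B0 B1 UNIV}"

definition dec_le ::
  "('a::ab_group_add \<Rightarrow> 'b::ab_group_add) \<Rightarrow> ('a set \<times> 'b set) \<times> ('a set \<times> 'b set)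
     \<Rightarrow> ('a set \<times> 'b set) \<times> ('a set \<times> 'b set) \<Rightarrow> bool" where
  "dec_le d x y \<longleftrightarrow>
     (case x of ((A0, B0), (A1, B1)) \<Rightarrow> case y of ((A0', B0'), (A1', B1')) \<Rightarrow>
       (\<exists>C D. is_restriction d (C, D) \<and> int_dsum A0' C A0 \<and> int_dsum B0' D B0
              \<and> int_dsum A1 C A1' \<and> int_dsum B1 D B1'))"

definition Dec_I ::
  "('a::ab_group_add \<Rightarrow> 'b::ab_group_add) \<Rightarrow> (('a set \<times> 'b set) \<times> ('a set \<times> 'b set)) set" where
  "Dec_I d = {x \<in> Dec d. bij_betw d (fst (snd x)) (snd (snd x))}"

definition Dec_I_max ::
  "('a::ab_group_add \<Rightarrow> 'b::ab_group_add) \<Rightarrow> (('a set \<times> 'b set) \<times> ('a set \<times> 'b set)) set" where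
  "Dec_I_max d = {x \<in> Dec_I d. \<forall>y \<in> Dec_I d. dec_le d x y \<longrightarrow> y = x}"

definition zsmul :: "int \<Rightarrow> 'x::ab_group_add \<Rightarrow> 'x" where
  "zsmul k x = (if 0 \<le> k then (((+) x) ^^ nat k) 0 else - ((((+) x) ^^ nat (- k)) 0))"

text \<open>The ring Q(d) = Z (+) Hom(B,A).\<close>
definition Q_carrier :: "(int \<times> ('b::ab_group_add \<Rightarrow> 'a::ab_group_add)) set" where
  "Q_carrier = {q. is_hom (snd q)}"

definition qmult ::
  "('a::ab_group_add \<Rightarrow> 'b::ab_group_add) \<Rightarrow> int \<times> ('b \<Rightarrow> 'a) \<Rightarrow> int \<times> ('b \<Rightarrow> 'a) \<Rightarrow> int \<times> ('b \<Rightarrow> 'a)" where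
  "qmult d p q = (case p of (m, f) \<Rightarrow> case q of (n, g) \<Rightarrow>
      (m * n, \<lambda>b. zsmul m (g b) + zsmul n (f b) + f (d (g b))))"

definition qone :: "int \<times> ('b \<Rightarrow> 'a::ab_group_add)" where
  "qone = (1, \<lambda>_. 0)"

definition Ustar ::
  "('a::ab_group_add \<Rightarrow> 'b::ab_group_add) \<Rightarrow> (int \<times> ('b \<Rightarrow> 'a)) set" where
  "Ustar d = {q \<in> Q_carrier. fst q = 1 \<and>
                 (\<exists>r \<in> Q_carrier. qmult d q r = qone \<and> qmult d r q = qone)}"

definition act ::
  "('a::ab_group_add \<Rightarrow> 'b::ab_group_add) \<Rightarrow> int \<times> ('b \<Rightarrow> 'a)
     \<Rightarrow> ('a set \<times> 'b set) \<times> ('a set \<times> 'b set) \<Rightarrow> ('a set \<times> 'b set) \<times> ('a set \<times> 'b set)" where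
  "act d q x = (let f = snd q; \<alpha> = (\<lambda>a. a + f (d a)); \<beta> = (\<lambda>b. b + d (f b)) in
     case x of ((A0, B0), (A1, B1)) \<Rightarrow> ((\<alpha> ` A0, \<beta> ` B0), (\<alpha> ` A1, \<beta> ` B1)))"

end

theory Submission
  imports Defs
begin


lemma subgrp_0: "subgrp S \<Longrightarrow> 0 \<in> S" by (simp add: subgrp_def)
lemma subgrp_add: "subgrp S \<Longrightarrow> x \<in> S \<Longrightarrow> y \<in> S \<Longrightarrow> x + y \<in> S" by (simp add: subgrp_def)
lemma subgrp_uminus: "subgrp S \<Longrightarrow> x \<in> S \<Longrightarrow> - x \<in> S" by (simp add: subgrp_def)
lemma subgrp_diff: "subgrp S \<Longrightarrow> x \<in> S \<Longrightarrow> y \<in> S \<Longrightarrow> x - y \<in> S"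
  by (metis diff_conv_add_uminus subgrp_add subgrp_uminus)

lemma hom_add: "is_hom h \<Longrightarrow> h (x + y) = h x + h y" by (simp add: is_hom_def)
lemma hom_0: "is_hom h \<Longrightarrow> h 0 = 0"
  by (metis add.right_neutral add_left_cancel is_hom_def)
lemma hom_uminus: assumes "is_hom h" shows "h (- x) = - h x"
proof -
  have "h (- x) + h x = 0" using hom_add[OF assms, of "- x" x] hom_0[OF assms] by simp
  then show ?thesis by (simp add: eq_neg_iff_add_eq_0)
qed
lemma hom_diff: assumes "is_hom h" shows "h (x - y) = h x - h y"
proof -
  have "h (x - y) = h (x + - y)" by simp
  also have "\<dots> = h x + h (- y)" by (rule hom_add[OF assms])
  also have "\<dots> = h x - h y" using hom_uminus[OF assms, of y] by simp
  finally show ?thesis .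
qed
lemma hom_comp: "is_hom h \<Longrightarrow> is_hom g \<Longrightarrow> is_hom (\<lambda>x. h (g x))"
  by (simp add: is_hom_def)
lemma hom_funpow: fixes h :: "'x::ab_group_add \<Rightarrow> 'x" shows "is_hom h \<Longrightarrow> is_hom (h ^^ n)"
proof (induction n)
  case 0 then show ?case by (simp add: is_hom_def)
next
  case (Suc n) then show ?case unfolding is_hom_def by (metis comp_apply funpow.simps(2))
qed

lemma subgrp_image: assumes hh: "is_hom h" and sS: "subgrp S" shows "subgrp (h ` S)"
proof -
  have "0 \<in> h ` S" using hom_0[OF hh] subgrp_0[OF sS] by (metis imageI)
  moreover have "p + q \<in> h ` S" if "p \<in> h ` S" "q \<in> h ` S" for p q
  proof -
    from that obtain u v where "p = h u" "q = h v" "u \<in> S" "v \<in> S" by blast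
    then show ?thesis using hom_add[OF hh, of u v] subgrp_add[OF sS, of u v] by (metis imageI)
  qed
  moreover have "- p \<in> h ` S" if "p \<in> h ` S" for p
  proof -
    from that obtain u where "p = h u" "u \<in> S" by blast
    then show ?thesis using hom_uminus[OF hh, of u] subgrp_uminus[OF sS, of u] by (metis imageI)
  qed
  ultimately show ?thesis unfolding subgrp_def by blast
qed
lemma subgrp_range: "is_hom h \<Longrightarrow> subgrp (range h)"
  using subgrp_image[of h UNIV] by (simp add: subgrp_def)
lemma subgrp_ker: "is_hom h \<Longrightarrow> subgrp S \<Longrightarrow> subgrp {v \<in> S. h v = 0}"
  unfolding subgrp_def by (auto simp: hom_0 hom_add hom_uminus)

lemma hom_inj_on: assumes "is_hom h" "subgrp S" "\<And>v. v \<in> S \<Longrightarrow> h v = 0 \<Longrightarrow> v = 0"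
  shows "inj_on h S"
proof (rule inj_onI)
  fix u v assume "u \<in> S" "v \<in> S" "h u = h v"
  then have "h (u - v) = 0" using assms(1) by (simp add: hom_diff)
  then have "u - v = 0" using assms subgrp_diff \<open>u \<in> S\<close> \<open>v \<in> S\<close> by blast
  then show "u = v" by simp
qed

lemma sum_set_comm: "{x + y |x y. x \<in> X \<and> y \<in> Y} = {x + y |x y. x \<in> Y \<and> (y::'x::ab_semigroup_add) \<in> X}"
proof (intro set_eqI iffI)
  fix v assume "v \<in> {x + y |x y. x \<in> X \<and> y \<in> Y}"
  then obtain x y where "v = y + x" "x \<in> X" "y \<in> Y" by (auto simp: add.commute)
  then show "v \<in> {x + y |x y. x \<in> Y \<and> y \<in> X}" by blast
next
  fix v assume "v \<in> {x + y |x y. x \<in> Y \<and> y \<in> X}"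
  then obtain x y where "v = y + x" "x \<in> Y" "y \<in> X" by (auto simp: add.commute)
  then show "v \<in> {x + y |x y. x \<in> X \<and> y \<in> Y}" by blast
qed

lemma int_dsum_sym: "int_dsum X Y Z \<Longrightarrow> int_dsum Y X Z"
  unfolding int_dsum_def using sum_set_comm[of X Y] by (simp add: Int_commute)

lemma int_dsum_mem: "int_dsum X Y Z \<Longrightarrow> v \<in> Z \<longleftrightarrow> (\<exists>x y. v = x + y \<and> x \<in> X \<and> y \<in> Y)"
  unfolding int_dsum_def by blast

lemma int_dsum_inter: "int_dsum X Y Z \<Longrightarrow> v \<in> X \<Longrightarrow> v \<in> Y \<Longrightarrow> v = 0"
  unfolding int_dsum_def by blast

lemma int_dsum_left_sub: assumes "int_dsum X Y Z" "subgrp Y" shows "X \<subseteq> Z"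
proof
  fix x assume x: "x \<in> X"
  have "x = x + 0" by simp
  then have "x \<in> {x + y |x y. x \<in> X \<and> y \<in> Y}" using x subgrp_0[OF assms(2)] by blast
  then show "x \<in> Z" using assms(1) unfolding int_dsum_def by simp
qed

lemma int_dsum_right_sub: "int_dsum X Y Z \<Longrightarrow> subgrp X \<Longrightarrow> Y \<subseteq> Z"
  using int_dsum_left_sub int_dsum_sym by blast

definition proj :: "'x::ab_group_add set \<Rightarrow> 'x set \<Rightarrow> 'x \<Rightarrow> 'x" where
  "proj X Y v = (THE x. x \<in> X \<and> v - x \<in> Y)"

lemma proj_ex1:
  assumes "subgrp X" "subgrp Y" "int_dsum X Y UNIV"
  shows "\<exists>!x. x \<in> X \<and> v - x \<in> Y"
proof -
  obtain x y where "v = x + y" "x \<in> X" "y \<in> Y" using int_dsum_mem[OF assms(3)] by blast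
  then have ex: "x \<in> X \<and> v - x \<in> Y" by simp
  show ?thesis
  proof (rule ex1I[of _ x])
    show "x \<in> X \<and> v - x \<in> Y" by (rule ex)
  next
    fix x' assume h: "x' \<in> X \<and> v - x' \<in> Y"
    have "x' - x \<in> X" using h ex assms subgrp_diff by blast
    moreover have "x' - x = (v - x) - (v - x')" by simp
    then have "x' - x \<in> Y" using h ex assms subgrp_diff by metis
    ultimately have "x' - x = 0" using int_dsum_inter[OF assms(3)] by blast
    then show "x' = x" by simp
  qed
qed

lemma proj_prop:
  assumes "subgrp X" "subgrp Y" "int_dsum X Y UNIV"
  shows "proj X Y v \<in> X" "v - proj X Y v \<in> Y"
  using theI'[OF proj_ex1[OF assms, of v]] unfolding proj_def by auto

lemma proj_unique:
  assumes "subgrp X" "subgrp Y" "int_dsum X Y UNIV" "x \<in> X" "v - x \<in> Y"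
  shows "proj X Y v = x"
  using proj_ex1[OF assms(1-3), of v] proj_prop[OF assms(1-3), of v] assms(4,5) by blast

lemma proj_add:
  assumes "subgrp X" "subgrp Y" "int_dsum X Y UNIV"
  shows "proj X Y (u + v) = proj X Y u + proj X Y v"
proof (rule proj_unique[OF assms])
  show "proj X Y u + proj X Y v \<in> X" using proj_prop[OF assms] assms subgrp_add by blast
  have "u + v - (proj X Y u + proj X Y v) = (u - proj X Y u) + (v - proj X Y v)" by simp
  then show "u + v - (proj X Y u + proj X Y v) \<in> Y" using proj_prop[OF assms] assms subgrp_add by metis
qed

lemma proj_hom: "subgrp X \<Longrightarrow> subgrp Y \<Longrightarrow> int_dsum X Y UNIV \<Longrightarrow> is_hom (proj X Y)"
  using proj_add is_hom_def by blast

lemma proj_id: "subgrp X \<Longrightarrow> subgrp Y \<Longrightarrow> int_dsum X Y UNIV \<Longrightarrow> x \<in> X \<Longrightarrow> proj X Y x = x"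
  by (rule proj_unique) (auto simp: subgrp_0)

lemma proj_zero: "subgrp X \<Longrightarrow> subgrp Y \<Longrightarrow> int_dsum X Y UNIV \<Longrightarrow> y \<in> Y \<Longrightarrow> proj X Y y = 0"
  by (rule proj_unique) (auto simp: subgrp_0)

lemma proj_sum: assumes "subgrp X" "subgrp Y" "int_dsum X Y UNIV"
  shows "proj X Y v + proj Y X v = v"
proof -
  have "proj Y X v = v - proj X Y v"
    by (rule proj_unique) (use assms proj_prop[OF assms] int_dsum_sym in auto)
  then show ?thesis by simp
qed

lemma funpow_periodic:
  fixes \<phi> :: "'a::finite \<Rightarrow> 'a"
  shows "\<exists>i p. 0 < p \<and> (\<forall>n k. i \<le> n \<longrightarrow> \<phi>^^(n + k*p) = \<phi>^^n)"
proof -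
  have "\<not> inj (\<lambda>n::nat. \<phi>^^n)"
  proof
    assume inj: "inj (\<lambda>n::nat. \<phi>^^n)"
    have fin: "finite (range (\<lambda>n::nat. \<phi>^^n))" by simp
    have "finite (UNIV :: nat set)" by (rule finite_imageD[OF fin inj])
    then show False by simp
  qed
  then obtain i j :: nat where ij: "i \<noteq> j" "\<phi>^^i = \<phi>^^j" unfolding inj_def by blast
  then obtain i j where ij: "i < j" "\<phi>^^i = \<phi>^^j" by (metis linorder_neqE_nat)
  define p where "p = j - i"
  have step: "\<phi>^^(n + p) = \<phi>^^n" if "i \<le> n" for n
  proof -
    have "\<phi>^^(n + p) = \<phi>^^(n - i) \<circ> \<phi>^^j" using that ij by (simp add: p_def flip: funpow_add)
    also have "\<dots> = \<phi>^^(n - i) \<circ> \<phi>^^i" using ij by simp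
    also have "\<dots> = \<phi>^^n" using that by (simp flip: funpow_add)
    finally show ?thesis .
  qed
  have "\<phi>^^(n + k*p) = \<phi>^^n" if "i \<le> n" for n k
    using that
  proof (induction k)
    case 0 then show ?case by simp
  next
    case (Suc k)
    have "\<phi>^^(n + Suc k * p) = \<phi>^^((n + k*p) + p)" by (simp add: algebra_simps)
    also have "\<dots> = \<phi>^^(n + k*p)" using step Suc by simp
    finally show ?case using Suc by simp
  qed
  then show ?thesis using ij p_def by (intro exI[of _ i] exI[of _ p]) auto
qed

lemma common_idem:
  fixes \<phi> :: "'a::finite \<Rightarrow> 'a" and \<psi> :: "'b::finite \<Rightarrow> 'b"
  shows "\<exists>N. 0 < N \<and> \<phi>^^N \<circ> \<phi>^^N = \<phi>^^N \<and> \<psi>^^N \<circ> \<psi>^^N = \<psi>^^N"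
proof -
  obtain i1 p1 where 1: "0 < p1" "\<And>n k. i1 \<le> n \<Longrightarrow> \<phi>^^(n + k*p1) = \<phi>^^n"
    using funpow_periodic[of \<phi>] by blast
  obtain i2 p2 where 2: "0 < p2" "\<And>n k. i2 \<le> n \<Longrightarrow> \<psi>^^(n + k*p2) = \<psi>^^n"
    using funpow_periodic[of \<psi>] by blast
  define N where "N = p1 * p2 * (i1 + i2 + 1)"
  have "1 \<le> p1 * p2" using 1 2 by simp
  then have ge: "i1 + i2 + 1 \<le> N" unfolding N_def
    using mult_le_mono1[of 1 "p1 * p2" "i1 + i2 + 1"] by simp
  have "\<phi>^^N \<circ> \<phi>^^N = \<phi>^^(N + N)" by (rule funpow_add[symmetric])
  also have "\<dots> = \<phi>^^(N + (p2 * (i1 + i2 + 1)) * p1)"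
  proof -
    have "N + N = N + (p2 * (i1 + i2 + 1)) * p1" unfolding N_def by (simp add: algebra_simps)
    then show ?thesis by metis
  qed
  also have "\<dots> = \<phi>^^N" using 1 ge by simp
  finally have a: "\<phi>^^N \<circ> \<phi>^^N = \<phi>^^N" .
  have "\<psi>^^N \<circ> \<psi>^^N = \<psi>^^(N + N)" by (rule funpow_add[symmetric])
  also have "\<dots> = \<psi>^^(N + (p1 * (i1 + i2 + 1)) * p2)"
  proof -
    have "N + N = N + (p1 * (i1 + i2 + 1)) * p2" unfolding N_def by (simp add: algebra_simps)
    then show ?thesis by metis
  qed
  also have "\<dots> = \<psi>^^N" using 2 ge by simp
  finally have b: "\<psi>^^N \<circ> \<psi>^^N = \<psi>^^N" .
  show ?thesis using a b ge by (intro exI[of _ N]) auto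
qed



lemma DecI_unfold: "((A0,B0),(A1,B1)) \<in> Dec_I d \<longleftrightarrow> subgrp A0 \<and> subgrp B0 \<and> subgrp A1 \<and> subgrp B1
   \<and> d ` A0 \<subseteq> B0 \<and> d ` A1 \<subseteq> B1 \<and> int_dsum A0 A1 UNIV \<and> int_dsum B0 B1 UNIV \<and> bij_betw d A1 B1"
  by (auto simp: Dec_I_def Dec_def is_restriction_def)

lemma subgrp_sum: assumes "subgrp X" "subgrp Y" shows "subgrp {u + v |u v. u \<in> X \<and> v \<in> Y}"
  (is "subgrp ?S")
proof -
  have "0 \<in> ?S" using assms subgrp_0 by force
  moreover have "p + q \<in> ?S" if hp: "p \<in> ?S" and hq: "q \<in> ?S" for p q
  proof -
    obtain u v where "p = u + v" "u \<in> X" "v \<in> Y" using hp by blast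
    moreover obtain u' v' where "q = u' + v'" "u' \<in> X" "v' \<in> Y" using hq by blast
    moreover have "p + q = (u + u') + (v + v')" using calculation by (simp add: algebra_simps)
    ultimately show ?thesis using assms subgrp_add by blast
  qed
  moreover have "- p \<in> ?S" if hp: "p \<in> ?S" for p
  proof -
    obtain u v where "p = u + v" "u \<in> X" "v \<in> Y" using hp by blast
    moreover have "- p = (- u) + (- v)" using calculation by (simp add: algebra_simps)
    ultimately show ?thesis using assms subgrp_uminus by blast
  qed
  ultimately show ?thesis unfolding subgrp_def by blast
qed

lemma split_dsum:
  assumes sX0: "subgrp X0" and sX1: "subgrp X1" and sK: "subgrp K" and sC: "subgrp C"
    and d0: "int_dsum X0 X1 UNIV" and d1: "int_dsum K C X0"
  shows "int_dsum K {u + v |u v. u \<in> X1 \<and> v \<in> C} UNIV"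
    "int_dsum X1 C {u + v |u v. u \<in> X1 \<and> v \<in> C}"
    "subgrp {u + v |u v. u \<in> X1 \<and> v \<in> C}"
proof -
  define S where "S = {u + v |u v. u \<in> X1 \<and> v \<in> C}"
  have CX0: "C \<subseteq> X0" using int_dsum_right_sub[OF d1 sK] .
  have KX0: "K \<subseteq> X0" using int_dsum_left_sub[OF d1 sC] .
  show "subgrp {u + v |u v. u \<in> X1 \<and> v \<in> C}" using subgrp_sum[OF sX1 sC] .
  have "X1 \<inter> C = {0}"
  proof (intro set_eqI iffI)
    fix w assume w: "w \<in> X1 \<inter> C"
    then have "w \<in> X0" "w \<in> X1" using CX0 by auto
    then have "w = 0" by (intro int_dsum_inter[OF d0])
    then show "w \<in> {0}" by simp
  next
    fix w :: 'a assume "w \<in> {0}"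
    then show "w \<in> X1 \<inter> C" using subgrp_0[OF sX1] subgrp_0[OF sC] by simp
  qed
  then show "int_dsum X1 C {u + v |u v. u \<in> X1 \<and> v \<in> C}" unfolding int_dsum_def by simp
  have i: "K \<inter> S = {0}"
  proof (intro set_eqI iffI)
    fix k assume "k \<in> K \<inter> S"
    then obtain u c where k: "k \<in> K" "k = u + c" "u \<in> X1" "c \<in> C" unfolding S_def by blast
    have "u = k - c" using k by simp
    moreover have "k \<in> X0" "c \<in> X0" using k KX0 CX0 by auto
    ultimately have "u \<in> X0" using subgrp_diff[OF sX0] by simp
    then have "u = 0" using int_dsum_inter[OF d0] k(3) by simp
    then have "k = c" using k by simp
    then have "k = 0" using int_dsum_inter[OF d1] k by simp
    then show "k \<in> {0}" by simp
  next
    fix k :: 'a assume "k \<in> {0}"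
    moreover have "(0::'a) = 0 + 0" by simp
    ultimately show "k \<in> K \<inter> S" unfolding S_def using subgrp_0[OF sX1] subgrp_0[OF sC] subgrp_0[OF sK]
      by blast
  qed
  have s: "{x + y |x y. x \<in> K \<and> y \<in> S} = UNIV"
  proof (intro set_eqI iffI)
    fix w :: 'a assume "w \<in> UNIV"
    obtain x0 x1 where w: "w = x0 + x1" "x0 \<in> X0" "x1 \<in> X1" using int_dsum_mem[OF d0] by blast
    obtain k c where x0: "x0 = k + c" "k \<in> K" "c \<in> C" using int_dsum_mem[OF d1] w(2) by blast
    have e: "w = k + (x1 + c)" using w x0 by (simp add: algebra_simps)
    have "x1 + c \<in> S" unfolding S_def using w(3) x0(3) by blast
    then show "w \<in> {x + y |x y. x \<in> K \<and> y \<in> S}" using e x0(2) by blast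
  qed simp
  show "int_dsum K {u + v |u v. u \<in> X1 \<and> v \<in> C} UNIV"
    unfolding int_dsum_def S_def[symmetric] using i s by simp
qed

lemma idem_split:
  fixes p :: "'x::ab_group_add \<Rightarrow> 'x"
  assumes hp: "is_hom p" and pp: "\<And>v. p (p v) = p v" and rX: "range p \<subseteq> X" and sX: "subgrp X"
  shows "int_dsum {v \<in> X. p v = 0} (range p) X"
proof -
  have i: "{v \<in> X. p v = 0} \<inter> range p = {0}"
  proof
    show "{v \<in> X. p v = 0} \<inter> range p \<subseteq> {0}" using pp by force
    show "{0} \<subseteq> {v \<in> X. p v = 0} \<inter> range p" using sX subgrp_0 hom_0[OF hp] by (auto intro: range_eqI[of 0 p 0])
  qed
  have s: "{x + y |x y. x \<in> {v \<in> X. p v = 0} \<and> y \<in> range p} = X"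
  proof (intro set_eqI iffI)
    fix w assume "w \<in> {x + y |x y. x \<in> {v \<in> X. p v = 0} \<and> y \<in> range p}"
    then show "w \<in> X" using rX sX subgrp_add by blast
  next
    fix w assume w: "w \<in> X"
    have "p (w - p w) = 0" using hom_diff[OF hp] pp by simp
    moreover have "w - p w \<in> X" using w rX sX subgrp_diff by blast
    moreover have "w = (w - p w) + p w" by simp
    ultimately show "w \<in> {x + y |x y. x \<in> {v \<in> X. p v = 0} \<and> y \<in> range p}" by blast
  qed
  show ?thesis unfolding int_dsum_def using i s by blast
qed

lemma dec_comm:
  assumes hd: "is_hom d" and z: "((A0,B0),(A1,B1)) \<in> Dec_I d"
  shows "d (proj A0 A1 a) = proj B0 B1 (d a)" "d (proj A1 A0 a) = proj B1 B0 (d a)"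
proof -
  note Z = z[unfolded DecI_unfold]
  have sA0: "subgrp A0" and sB0: "subgrp B0" and sA1: "subgrp A1" and sB1: "subgrp B1"
    and iA0: "d ` A0 \<subseteq> B0" and iA1: "d ` A1 \<subseteq> B1" and dA: "int_dsum A0 A1 UNIV"
    and dB: "int_dsum B0 B1 UNIV" using Z by auto
  have dA': "int_dsum A1 A0 UNIV" and dB': "int_dsum B1 B0 UNIV" using dA dB int_dsum_sym by auto
  show "d (proj A0 A1 a) = proj B0 B1 (d a)"
  proof (rule proj_unique[OF sB0 sB1 dB, symmetric])
    show "d (proj A0 A1 a) \<in> B0" using proj_prop[OF sA0 sA1 dA] iA0 by blast
    have "d a - d (proj A0 A1 a) = d (a - proj A0 A1 a)" using hom_diff[OF hd] by simp
    then show "d a - d (proj A0 A1 a) \<in> B1" using proj_prop[OF sA0 sA1 dA] iA1 by auto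
  qed
  show "d (proj A1 A0 a) = proj B1 B0 (d a)"
  proof (rule proj_unique[OF sB1 sB0 dB', symmetric])
    show "d (proj A1 A0 a) \<in> B1" using proj_prop[OF sA1 sA0 dA'] iA1 by blast
    have "d a - d (proj A1 A0 a) = d (a - proj A1 A0 a)" using hom_diff[OF hd] by simp
    then show "d a - d (proj A1 A0 a) \<in> B0" using proj_prop[OF sA1 sA0 dA'] iA0 by auto
  qed
qed

lemma dec_ker:
  assumes hd: "is_hom d" and z: "((A0,B0),(A1,B1)) \<in> Dec_I d" and "u \<in> A1" "d u = 0"
  shows "u = 0"
proof -
  have "inj_on d A1" "0 \<in> A1" using z[unfolded DecI_unfold] bij_betw_imp_inj_on subgrp_0 by auto
  then show ?thesis using assms hom_0[OF hd] by (metis inj_onD)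
qed

lemma dec_section:
  assumes hd: "is_hom d" and z: "((A0,B0),(A1,B1)) \<in> Dec_I d"
  shows "\<exists>s. is_hom s \<and> (\<forall>b. s b \<in> A1) \<and> (\<forall>b. d (s b) = proj B1 B0 b) \<and> (\<forall>a. s (d a) = proj A1 A0 a)"
proof -
  note Z = z[unfolded DecI_unfold]
  have sA0: "subgrp A0" and sB0: "subgrp B0" and sA1: "subgrp A1" and sB1: "subgrp B1"
    and iA0: "d ` A0 \<subseteq> B0" and iA1: "d ` A1 \<subseteq> B1" and dA: "int_dsum A0 A1 UNIV"
    and dB: "int_dsum B0 B1 UNIV" and bj: "bij_betw d A1 B1" using Z by auto
  have dA': "int_dsum A1 A0 UNIV" and dB': "int_dsum B1 B0 UNIV" using dA dB int_dsum_sym by auto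
  define s where "s b = the_inv_into A1 d (proj B1 B0 b)" for b
  have sin: "s b \<in> A1" for b
    unfolding s_def using the_inv_into_into[OF bij_betw_imp_inj_on[OF bj]] proj_prop[OF sB1 sB0 dB'] bij_betw_imp_surj_on[OF bj]
    by blast
  have ds: "d (s b) = proj B1 B0 b" for b
    unfolding s_def using f_the_inv_into_f_bij_betw[OF bj] proj_prop[OF sB1 sB0 dB'] by blast
  have inj: "u = v" if "u \<in> A1" "v \<in> A1" "d u = d v" for u v
    using bij_betw_imp_inj_on[OF bj] that by (metis inj_onD)
  have hs: "is_hom s" unfolding is_hom_def
  proof (intro allI)
    fix b c
    have "d (s (b + c)) = d (s b + s c)"
      using ds hom_add[OF hd] proj_add[OF sB1 sB0 dB'] by simp
    then show "s (b + c) = s b + s c" using inj sin sA1 subgrp_add by blast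
  qed
  have sd: "s (d a) = proj A1 A0 a" for a
  proof -
    have "d (s (d a)) = d (proj A1 A0 a)" using ds dec_comm[OF hd z] by simp
    then show ?thesis using inj sin proj_prop[OF sA1 sA0 dA'] by blast
  qed
  show ?thesis using hs sin ds sd by blast
qed



lemma lemF:
  fixes d :: "'a::{ab_group_add,finite} \<Rightarrow> 'b::{ab_group_add,finite}"
  assumes hd: "is_hom d" and zmax: "((A0,B0),(A1,B1)) \<in> Dec_I_max d"
    and z': "((A0',B0'),(A1',B1')) \<in> Dec_I d" and aA0: "a \<in> A0" and aA1': "a \<in> A1'"
  shows "a = 0"
proof (rule ccontr)
  assume a0: "a \<noteq> 0"
  have z: "((A0,B0),(A1,B1)) \<in> Dec_I d" using zmax by (simp add: Dec_I_max_def)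
  note Z = z[unfolded DecI_unfold]
  have sA0: "subgrp A0" and sB0: "subgrp B0" and sA1: "subgrp A1" and sB1: "subgrp B1"
    and iA0: "d ` A0 \<subseteq> B0" and iA1: "d ` A1 \<subseteq> B1" and dA: "int_dsum A0 A1 UNIV"
    and dB: "int_dsum B0 B1 UNIV" and bj: "bij_betw d A1 B1" using Z by auto
  note Z' = z'[unfolded DecI_unfold]
  have sA0': "subgrp A0'" and sB0': "subgrp B0'" and sA1': "subgrp A1'" and sB1': "subgrp B1'"
    and dA': "int_dsum A0' A1' UNIV"
    and dB': "int_dsum B0' B1' UNIV" and bj': "bij_betw d A1' B1'" using Z' by auto
  have dA's: "int_dsum A1' A0' UNIV" and dB's: "int_dsum B1' B0' UNIV" using dA' dB' int_dsum_sym by auto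
  define \<phi> where "\<phi> = (\<lambda>v. proj A0 A1 (proj A1' A0' v))"
  define \<psi> where "\<psi> = (\<lambda>b. proj B0 B1 (proj B1' B0' b))"
  have h\<phi>: "is_hom \<phi>" unfolding \<phi>_def
    by (rule hom_comp[OF proj_hom[OF sA0 sA1 dA] proj_hom[OF sA1' sA0' dA's]])
  have h\<psi>: "is_hom \<psi>" unfolding \<psi>_def
    by (rule hom_comp[OF proj_hom[OF sB0 sB1 dB] proj_hom[OF sB1' sB0' dB's]])
  have d\<phi>: "d (\<phi> v) = \<psi> (d v)" for v
    unfolding \<phi>_def \<psi>_def using dec_comm[OF hd z] dec_comm[OF hd z'] by simp
  have \<phi>A0: "\<phi> v \<in> A0" for v unfolding \<phi>_def using proj_prop[OF sA0 sA1 dA] by blast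
  have \<psi>B0: "\<psi> b \<in> B0" for b unfolding \<psi>_def using proj_prop[OF sB0 sB1 dB] by blast
  have \<phi>ker: "\<phi> c = 0" if "d c = 0" for c
  proof -
    have "d (proj A1' A0' c) = 0"
      using dec_comm(2)[OF hd z', of c] that hom_0[OF proj_hom[OF sB1' sB0' dB's]] by simp
    then have "proj A1' A0' c = 0" using dec_ker[OF hd z'] proj_prop[OF sA1' sA0' dA's] by blast
    then show ?thesis unfolding \<phi>_def using hom_0[OF proj_hom[OF sA0 sA1 dA]] by simp
  qed
  have \<psi>im: "\<exists>a0\<in>A0. \<psi> b = d a0" for b
  proof -
    have "proj B1' B0' b \<in> B1'" using proj_prop[OF sB1' sB0' dB's] by blast
    then obtain a' where a': "a' \<in> A1'" "proj B1' B0' b = d a'"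
      using bij_betw_imp_surj_on[OF bj'] by blast
    have "\<psi> b = d (proj A0 A1 a')" unfolding \<psi>_def using a' dec_comm(1)[OF hd z] by simp
    then show ?thesis using proj_prop[OF sA0 sA1 dA] by blast
  qed
  have \<phi>a: "\<phi> a = a" unfolding \<phi>_def
    using proj_id[OF sA1' sA0' dA's aA1'] proj_id[OF sA0 sA1 dA aA0] by simp
  obtain N where N: "0 < N" "\<phi>^^N \<circ> \<phi>^^N = \<phi>^^N" "\<psi>^^N \<circ> \<psi>^^N = \<psi>^^N"
    using common_idem[of \<phi> \<psi>] by blast
  define p where "p = \<phi>^^N"
  define s where "s = \<psi>^^N"
  have pp: "p (p v) = p v" for v using N(2) unfolding p_def by (metis comp_apply)
  have ss: "s (s v) = s v" for v using N(3) unfolding s_def by (metis comp_apply)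
  have hp: "is_hom p" unfolding p_def by (rule hom_funpow[OF h\<phi>])
  have hs: "is_hom s" unfolding s_def by (rule hom_funpow[OF h\<psi>])
  have dpow: "d ((\<phi>^^n) v) = (\<psi>^^n) (d v)" for n v
    by (induction n) (simp_all add: d\<phi>)
  have dp: "d (p v) = s (d v)" for v unfolding p_def s_def by (rule dpow)
  have apow: "(\<phi>^^n) a = a" for n by (induction n) (simp_all add: \<phi>a)
  have pa: "p a = a" unfolding p_def by (rule apow)
  have NS: "N = Suc (N - 1)" using N(1) by simp
  have psuc: "p v = (\<phi>^^(N-1)) (\<phi> v)" for v
    unfolding p_def by (subst NS) (simp only: funpow_Suc_right comp_apply)
  have psuc2: "p v = \<phi> ((\<phi>^^(N-1)) v)" for v
    unfolding p_def by (subst NS) (simp only: funpow.simps comp_apply)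
  have ssuc2: "s b = \<psi> ((\<psi>^^(N-1)) b)" for b
    unfolding s_def by (subst NS) (simp only: funpow.simps comp_apply)
  have pA0: "range p \<subseteq> A0" using psuc2 \<phi>A0 by auto
  have sB0r: "range s \<subseteq> B0" using ssuc2 \<psi>B0 by auto
  have pker: "c = 0" if hc: "c \<in> range p" and hd0: "d c = 0" for c
  proof -
    obtain w where "c = p w" using hc by blast
    then have "c = p c" using pp by simp
    also have "\<dots> = (\<phi>^^(N-1)) 0" using psuc \<phi>ker hd0 by simp
    also have "\<dots> = 0" using hom_0[OF hom_funpow[OF h\<phi>]] by simp
    finally show ?thesis .
  qed
  have sim: "s b \<in> d ` range p" for b
  proof -
    obtain a0 where "a0 \<in> A0" "\<psi> ((\<psi>^^(N-1)) b) = d a0" using \<psi>im by blast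
    then have "s b = s (d a0)" using ss ssuc2 by metis
    also have "\<dots> = d (p a0)" using dp by simp
    finally show ?thesis by blast
  qed
  define C where "C = range p"
  define K where "K = {v \<in> A0. p v = 0}"
  define D where "D = range s"
  define K' where "K' = {v \<in> B0. s v = 0}"
  define A1n where "A1n = {u + v |u v. u \<in> A1 \<and> v \<in> C}"
  define B1n where "B1n = {u + v |u v. u \<in> B1 \<and> v \<in> D}"
  have sC: "subgrp C" unfolding C_def by (rule subgrp_range[OF hp])
  have sD: "subgrp D" unfolding D_def by (rule subgrp_range[OF hs])
  have sK: "subgrp K" unfolding K_def by (rule subgrp_ker[OF hp sA0])
  have sK': "subgrp K'" unfolding K'_def by (rule subgrp_ker[OF hs sB0])
  have dsA: "int_dsum K C A0" unfolding K_def C_def by (rule idem_split[OF hp pp pA0 sA0])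
  have dsB: "int_dsum K' D B0" unfolding K'_def D_def by (rule idem_split[OF hs ss sB0r sB0])
  note SA = split_dsum[OF sA0 sA1 sK sC dA dsA, folded A1n_def]
  note SB = split_dsum[OF sB0 sB1 sK' sD dB dsB, folded B1n_def]
  have dK: "d ` K \<subseteq> K'"
  proof
    fix w assume "w \<in> d ` K"
    then obtain v where v: "v \<in> A0" "p v = 0" "w = d v" unfolding K_def by blast
    have "s w = d (p v)" using dp[of v] v(3) by simp
    then have "s w = 0" using v hom_0[OF hd] by simp
    moreover have "w \<in> B0" using v iA0 by blast
    ultimately show "w \<in> K'" unfolding K'_def by simp
  qed
  have dC: "d ` C \<subseteq> D" unfolding C_def D_def using dp by auto
  have CA0: "C \<subseteq> A0" using pA0 C_def by simp
  have DB0: "D \<subseteq> B0" using sB0r D_def by simp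
  have dA1n: "d ` A1n \<subseteq> B1n"
  proof
    fix w assume "w \<in> d ` A1n"
    then obtain u c where "w = d (u + c)" "u \<in> A1" "c \<in> C" unfolding A1n_def by blast
    then have "w = d u + d c" "d u \<in> B1" "d c \<in> D" using hom_add[OF hd] iA1 dC by auto
    then show "w \<in> B1n" unfolding B1n_def by blast
  qed
  have injn: "inj_on d A1n"
  proof (rule hom_inj_on[OF hd SA(3)])
    fix w assume "w \<in> A1n" "d w = 0"
    then obtain u c where uc0: "w = u + c" "u \<in> A1" "c \<in> C" "d w = 0"
      unfolding A1n_def by blast
    then have uc: "w = u + c" "u \<in> A1" "c \<in> C" "d u + d c = 0"
      using hom_add[OF hd, of u c] by auto
    have "d u = - d c" using uc(4) by (simp add: eq_neg_iff_add_eq_0)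
    moreover have "d u \<in> B1" using uc iA1 by auto
    moreover have "- d c \<in> B0" using uc dC DB0 sB0 subgrp_uminus by blast
    ultimately have "d u \<in> B0" "d u \<in> B1" by auto
    then have "d u = 0" by (rule int_dsum_inter[OF dB])
    then have "u = 0" using dec_ker[OF hd z] uc by blast
    moreover have "d c = 0" using uc \<open>d u = 0\<close> by simp
    then have "c = 0" using pker uc C_def by blast
    ultimately show "w = 0" using uc by simp
  qed
  have surjn: "B1n \<subseteq> d ` A1n"
  proof
    fix w assume "w \<in> B1n"
    then obtain b1 e where be: "w = b1 + e" "b1 \<in> B1" "e \<in> D" unfolding B1n_def by blast
    obtain u where u: "u \<in> A1" "b1 = d u" using be bij_betw_imp_surj_on[OF bj] by blast
    obtain c where c: "c \<in> C" "e = d c" using be sim D_def C_def by blast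
    have "w = d (u + c)" using be u c hom_add[OF hd] by simp
    moreover have "u + c \<in> A1n" using u c A1n_def by blast
    ultimately show "w \<in> d ` A1n" by blast
  qed
  have bjn: "bij_betw d A1n B1n" unfolding bij_betw_def using injn dA1n surjn by blast
  have yDec: "((K,K'),(A1n,B1n)) \<in> Dec_I d"
    unfolding DecI_unfold using sK sK' SA(1,3) SB(1,3) dK dA1n bjn by (intro conjI) assumption+
  have le: "dec_le d ((A0,B0),(A1,B1)) ((K,K'),(A1n,B1n))"
  proof -
    have "is_restriction d (C, D)" unfolding is_restriction_def using sC sD dC by simp
    then show ?thesis unfolding dec_le_def prod.case using dsA dsB SA(2) SB(2) by blast
  qed
  have "\<forall>y\<in>Dec_I d. dec_le d ((A0,B0),(A1,B1)) y \<longrightarrow> y = ((A0,B0),(A1,B1))"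
    using zmax by (simp add: Dec_I_max_def)
  then have "((K,K'),(A1n,B1n)) = ((A0,B0),(A1,B1))" using yDec le by blast
  then have "K = A0" by simp
  then have "p a = 0" using aA0 K_def by blast
  then show False using pa a0 by simp
qed



lemma zsmul_1: "zsmul 1 x = x" by (simp add: zsmul_def)

lemma finite_inj_bij: "inj (h :: 'x::finite \<Rightarrow> 'x) \<Longrightarrow> bij h"
  using finite_UNIV_inj_surj[of h] by (simp add: bij_def)

lemma ustar_bij:
  fixes d :: "'a::{ab_group_add,finite} \<Rightarrow> 'b::{ab_group_add,finite}"
  assumes hd: "is_hom d" and q: "q \<in> Ustar d"
  shows "is_hom (snd q)" "fst q = 1" "bij (\<lambda>a. a + snd q (d a))" "bij (\<lambda>b. b + d (snd q b))"
proof -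
  have hq: "is_hom (snd q)" and fq: "fst q = 1" using q by (simp_all add: Ustar_def Q_carrier_def)
  define f where "f = snd q"
  have qf: "q = (1, f)" using fq f_def by (cases q) simp
  have hf: "is_hom f" using hq f_def by simp
  obtain r where r: "r \<in> Q_carrier" "qmult d q r = qone" "qmult d r q = qone"
    using q unfolding Ustar_def by blast
  obtain n g where rg: "r = (n, g)" by (cases r)
  have hg: "is_hom g" using r(1) rg by (simp add: Q_carrier_def)
  have n1: "n = 1" using r(2) rg qf by (simp add: qmult_def qone_def)
  have e2: "f b + g b + g (d (f b)) = 0" for b
  proof -
    have "(\<lambda>b. f b + g b + g (d (f b))) = (\<lambda>_. 0)"
      using r(3) rg qf n1 by (simp add: qmult_def qone_def zsmul_1)
    from fun_cong[OF this, of b] show ?thesis by simp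
  qed
  show "is_hom (snd q)" "fst q = 1" using hq fq by auto
  have inv1: "(a + f (d a)) + g (d (a + f (d a))) = a" for a
  proof -
    have "(a + f (d a)) + g (d (a + f (d a))) = a + (f (d a) + g (d a) + g (d (f (d a))))"
      using hom_add[OF hd, of a "f (d a)"] hom_add[OF hg, of "d a" "d (f (d a))"]
      by (simp add: algebra_simps)
    then show ?thesis using e2[of "d a"] by simp
  qed
  have "inj (\<lambda>a. a + f (d a))"
  proof (rule injI)
    fix u v assume "u + f (d u) = v + f (d v)"
    then have "(u + f (d u)) + g (d (u + f (d u))) = (v + f (d v)) + g (d (v + f (d v)))" by simp
    then show "u = v" using inv1[of u] inv1[of v] by simp
  qed
  then show "bij (\<lambda>a. a + snd q (d a))" using f_def finite_inj_bij by simp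
  have inv2: "(b + d (f b)) + d (g (b + d (f b))) = b" for b
  proof -
    have x1: "d (g (b + d (f b))) = d (g b) + d (g (d (f b)))" using hom_add[OF hg] hom_add[OF hd] by simp
    have x2: "d (f b + g b + g (d (f b))) = d (f b) + d (g b) + d (g (d (f b)))" using hom_add[OF hd] by simp
    have "(b + d (f b)) + d (g (b + d (f b))) = b + d (f b + g b + g (d (f b)))"
      unfolding x1 x2 by (simp add: algebra_simps)
    then show ?thesis using e2[of b] hom_0[OF hd] by simp
  qed
  have "inj (\<lambda>b. b + d (f b))"
  proof (rule injI)
    fix u v assume "u + d (f u) = v + d (f v)"
    then have "(u + d (f u)) + d (g (u + d (f u))) = (v + d (f v)) + d (g (v + d (f v)))" by simp
    then show "u = v" using inv2[of u] inv2[of v] by simp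
  qed
  then show "bij (\<lambda>b. b + d (snd q b))" using f_def finite_inj_bij by simp
qed

lemma image_dsum:
  assumes hh: "is_hom h" and bh: "bij h" and ds: "int_dsum X Y UNIV"
  shows "int_dsum (h ` X) (h ` Y) UNIV"
proof -
  have i: "h ` X \<inter> h ` Y = h ` (X \<inter> Y)" using bh by (simp add: bij_def image_Int)
  have "X \<inter> Y = {0}" using ds int_dsum_def by blast
  then have i2: "h ` X \<inter> h ` Y = {0}" using i hom_0[OF hh] by simp
  have "{x + y |x y. x \<in> h ` X \<and> y \<in> h ` Y} = UNIV"
  proof (intro set_eqI iffI)
    fix w :: 'b
    obtain v where v: "w = h v" using bh by (metis bij_pointE)
    obtain x y where "v = x + y" "x \<in> X" "y \<in> Y" using int_dsum_mem[OF ds] by blast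
    then have "w = h x + h y" "h x \<in> h ` X" "h y \<in> h ` Y" using v hom_add[OF hh] by auto
    then show "w \<in> {x + y |x y. x \<in> h ` X \<and> y \<in> h ` Y}" by blast
  qed simp
  then show ?thesis using i2 int_dsum_def by blast
qed

lemma dsum_image_eq1:
  assumes hh: "is_hom h" and bh: "bij h" and sY0: "subgrp Y0"
    and i0: "h ` X0 \<subseteq> Y0" and i1: "h ` X1 \<subseteq> Y1"
    and dX: "int_dsum X0 X1 UNIV" and dY: "int_dsum Y0 Y1 UNIV"
  shows "h ` X0 = Y0"
proof
  show "h ` X0 \<subseteq> Y0" by (rule i0)
  show "Y0 \<subseteq> h ` X0"
  proof
    fix y assume y: "y \<in> Y0"
    obtain v where v: "y = h v" using bh by (metis bij_pointE)
    obtain x0 x1 where x: "v = x0 + x1" "x0 \<in> X0" "x1 \<in> X1" using int_dsum_mem[OF dX] by blast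
    have hv: "h v = h x0 + h x1" using x(1) hom_add[OF hh] by simp
    have "h x1 = y - h x0" using v hv by simp
    moreover have "h x0 \<in> Y0" using i0 x(2) by (meson image_subset_iff)
    ultimately have "h x1 \<in> Y0" using subgrp_diff[OF sY0 y] by simp
    moreover have "h x1 \<in> Y1" using i1 x(3) by (meson image_subset_iff)
    ultimately have "h x1 = 0" by (rule int_dsum_inter[OF dY])
    then have "y = h x0" using v hv by simp
    then show "y \<in> h ` X0" using x(2) by simp
  qed
qed

lemma dsum_image_eq:
  assumes hh: "is_hom h" and bh: "bij h" and sY0: "subgrp Y0" and sY1: "subgrp Y1"
    and i0: "h ` X0 \<subseteq> Y0" and i1: "h ` X1 \<subseteq> Y1"
    and dX: "int_dsum X0 X1 UNIV" and dY: "int_dsum Y0 Y1 UNIV"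
  shows "h ` X0 = Y0" "h ` X1 = Y1"
  using dsum_image_eq1[OF hh bh sY0 i0 i1 dX dY]
    dsum_image_eq1[OF hh bh sY1 i1 i0 int_dsum_sym[OF dX] int_dsum_sym[OF dY]] by auto

lemma act_eq: "act d q ((A0,B0),(A1,B1)) =
  (((\<lambda>a. a + snd q (d a)) ` A0, (\<lambda>b. b + d (snd q b)) ` B0),
   ((\<lambda>a. a + snd q (d a)) ` A1, (\<lambda>b. b + d (snd q b)) ` B1))"
  by (simp add: act_def Let_def)

lemma act_in:
  fixes d :: "'a::{ab_group_add,finite} \<Rightarrow> 'b::{ab_group_add,finite}"
  assumes hd: "is_hom d" and q: "q \<in> Ustar d" and x: "((A0,B0),(A1,B1)) \<in> Dec_I d"
  shows "act d q ((A0,B0),(A1,B1)) \<in> Dec_I d"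
    "card (fst (snd (act d q ((A0,B0),(A1,B1))))) = card A1"
proof -
  define f where "f = snd q"
  define \<alpha> where "\<alpha> = (\<lambda>a. a + f (d a))"
  define \<beta> where "\<beta> = (\<lambda>b. b + d (f b))"
  note U = ustar_bij[OF hd q]
  have hf: "is_hom f" using U(1) f_def by simp
  have b\<alpha>: "bij \<alpha>" using U(3) \<alpha>_def f_def by simp
  have b\<beta>: "bij \<beta>" using U(4) \<beta>_def f_def by simp
  have h\<alpha>: "is_hom \<alpha>" unfolding is_hom_def
  proof (intro allI)
    fix u v
    have "f (d (u + v)) = f (d u) + f (d v)" using hom_add[OF hd] hom_add[OF hf] by simp
    then show "\<alpha> (u + v) = \<alpha> u + \<alpha> v" unfolding \<alpha>_def by (simp add: algebra_simps)
  qed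
  have h\<beta>: "is_hom \<beta>" unfolding is_hom_def
  proof (intro allI)
    fix u v
    have "d (f (u + v)) = d (f u) + d (f v)" using hom_add[OF hd] hom_add[OF hf] by simp
    then show "\<beta> (u + v) = \<beta> u + \<beta> v" unfolding \<beta>_def by (simp add: algebra_simps)
  qed
  have comm: "d (\<alpha> a) = \<beta> (d a)" for a unfolding \<alpha>_def \<beta>_def using hom_add[OF hd] by simp
  have ae: "act d q ((A0,B0),(A1,B1)) = ((\<alpha> ` A0, \<beta> ` B0), (\<alpha> ` A1, \<beta> ` B1))"
    using act_eq[of d q] unfolding \<alpha>_def \<beta>_def f_def by simp
  note X = x[unfolded DecI_unfold]
  have sA0: "subgrp A0" and sB0: "subgrp B0" and sA1: "subgrp A1" and sB1: "subgrp B1"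
    and iA0: "d ` A0 \<subseteq> B0" and iA1: "d ` A1 \<subseteq> B1" and dA: "int_dsum A0 A1 UNIV"
    and dB: "int_dsum B0 B1 UNIV" and bj: "bij_betw d A1 B1" using X by auto
  have dimg: "d ` \<alpha> ` S = \<beta> ` d ` S" for S
  proof -
    have "d ` \<alpha> ` S = (\<lambda>a. d (\<alpha> a)) ` S" by (simp add: image_image)
    also have "\<dots> = (\<lambda>a. \<beta> (d a)) ` S" using comm by simp
    also have "\<dots> = \<beta> ` d ` S" by (simp add: image_image)
    finally show ?thesis .
  qed
  have i0: "d ` \<alpha> ` A0 \<subseteq> \<beta> ` B0" unfolding dimg using iA0 by (rule image_mono)
  have i1: "d ` \<alpha> ` A1 = \<beta> ` B1" unfolding dimg using bij_betw_imp_surj_on[OF bj] by simp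
  have inj1: "inj_on d (\<alpha> ` A1)"
  proof (rule inj_onI)
    fix u v assume u: "u \<in> \<alpha> ` A1" and v: "v \<in> \<alpha> ` A1" and e: "d u = d v"
    obtain u' where u': "u = \<alpha> u'" "u' \<in> A1" using u by blast
    obtain v' where v': "v = \<alpha> v'" "v' \<in> A1" using v by blast
    have "\<beta> (d u') = \<beta> (d v')" using e u' v' comm by simp
    then have "d u' = d v'" using injD[OF bij_is_inj[OF b\<beta>]] by blast
    then have "u' = v'" using inj_onD[OF bij_betw_imp_inj_on[OF bj]] u' v' by blast
    then show "u = v" using u' v' by simp
  qed
  have bj1: "bij_betw d (\<alpha> ` A1) (\<beta> ` B1)" unfolding bij_betw_def using inj1 i1 by simp
  show "act d q ((A0,B0),(A1,B1)) \<in> Dec_I d"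
    unfolding ae DecI_unfold
    using subgrp_image[OF h\<alpha> sA0] subgrp_image[OF h\<alpha> sA1] subgrp_image[OF h\<beta> sB0]
      subgrp_image[OF h\<beta> sB1] i0 i1 bj1 image_dsum[OF h\<alpha> b\<alpha> dA] image_dsum[OF h\<beta> b\<beta> dB]
    by (intro conjI) simp_all
  have "inj_on \<alpha> A1" using bij_is_inj[OF b\<alpha>] inj_on_subset by blast
  then show "card (fst (snd (act d q ((A0,B0),(A1,B1))))) = card A1"
    unfolding ae by (simp add: card_image)
qed

lemma card_max_is_max:
  fixes d :: "'a::{ab_group_add,finite} \<Rightarrow> 'b::{ab_group_add,finite}"
  assumes hd: "is_hom d" and x: "((A0,B0),(A1,B1)) \<in> Dec_I d"
    and mx: "\<forall>y\<in>Dec_I d. card (fst (snd y)) \<le> card A1"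
  shows "((A0,B0),(A1,B1)) \<in> Dec_I_max d"
  unfolding Dec_I_max_def
proof (intro CollectI conjI ballI impI x)
  fix y assume y: "y \<in> Dec_I d" and le: "dec_le d ((A0, B0), A1, B1) y"
  obtain A0' B0' A1' B1' where yy: "y = ((A0',B0'),(A1',B1'))" by (metis prod.collapse)
  note X = x[unfolded DecI_unfold]
  have sA0: "subgrp A0" and sB0: "subgrp B0" and sA1: "subgrp A1" and sB1: "subgrp B1"
    and dA: "int_dsum A0 A1 UNIV"
    and dB: "int_dsum B0 B1 UNIV" and bj: "bij_betw d A1 B1" using X by auto
  note Y = y[unfolded yy DecI_unfold]
  have sA0': "subgrp A0'" and sB0': "subgrp B0'" and bj': "bij_betw d A1' B1'" using Y by auto
  obtain C D where CD: "is_restriction d (C, D)" "int_dsum A0' C A0" "int_dsum B0' D B0"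
    "int_dsum A1 C A1'" "int_dsum B1 D B1'" using le unfolding yy dec_le_def by auto
  have sC: "subgrp C" and sD: "subgrp D" using CD(1) unfolding is_restriction_def by auto
  have "A1 \<subseteq> A1'" using int_dsum_left_sub[OF CD(4) sC] .
  moreover have "card A1' \<le> card A1" using mx y yy by force
  ultimately have A1eq: "A1 = A1'" by (metis card_seteq finite)
  have "C \<subseteq> A1'" using int_dsum_right_sub[OF CD(4) sA1] .
  moreover have "C \<subseteq> A0" using int_dsum_right_sub[OF CD(2) sA0'] .
  ultimately have "C \<subseteq> {0}" using A1eq int_dsum_inter[OF dA] by blast
  then have C0: "C = {0}" using sC subgrp_0 by blast
  have A0eq: "A0 = A0'" using CD(2) C0 unfolding int_dsum_def by auto
  have B1eq: "B1' = B1" using bij_betw_imp_surj_on[OF bj] bij_betw_imp_surj_on[OF bj'] A1eq by simp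
  have "D \<subseteq> B1'" using int_dsum_right_sub[OF CD(5) sB1] .
  moreover have "D \<subseteq> B0" using int_dsum_right_sub[OF CD(3) sB0'] .
  ultimately have "D \<subseteq> {0}" using B1eq int_dsum_inter[OF dB] by blast
  then have D0: "D = {0}" using sD subgrp_0 by blast
  have B0eq: "B0 = B0'" using CD(3) D0 unfolding int_dsum_def by auto
  show "y = ((A0, B0), A1, B1)" using yy A0eq B0eq A1eq B1eq by simp
qed



lemma lin4: "(P::'x::ab_group_add) = u1 + v1 \<Longrightarrow> Q = u2 + v2 \<Longrightarrow> (P + Q) + - (v1 + u2) = u1 + v2"
  by (simp add: algebra_simps)

lemma main_orbit:
  fixes d :: "'a::{ab_group_add,finite} \<Rightarrow> 'b::{ab_group_add,finite}"
  assumes hd: "is_hom d" and x0: "((A0,B0),(A1,B1)) \<in> Dec_I_max d"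
    and zmax: "((A0',B0'),(A1',B1')) \<in> Dec_I_max d"
  shows "\<exists>q \<in> Ustar d. act d q ((A0,B0),(A1,B1)) = ((A0',B0'),(A1',B1'))"
proof -
  have xin: "((A0,B0),(A1,B1)) \<in> Dec_I d" using x0 by (simp add: Dec_I_max_def)
  have zin: "((A0',B0'),(A1',B1')) \<in> Dec_I d" using zmax by (simp add: Dec_I_max_def)
  note X = xin[unfolded DecI_unfold]
  have sA0: "subgrp A0" and sB0: "subgrp B0" and sA1: "subgrp A1" and sB1: "subgrp B1"
    and dA: "int_dsum A0 A1 UNIV" and dB: "int_dsum B0 B1 UNIV" using X by auto
  have dAs: "int_dsum A1 A0 UNIV" and dBs: "int_dsum B1 B0 UNIV" using dA dB int_dsum_sym by auto
  note Z = zin[unfolded DecI_unfold]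
  have sA0': "subgrp A0'" and sB0': "subgrp B0'" and sA1': "subgrp A1'" and sB1': "subgrp B1'"
    and dA': "int_dsum A0' A1' UNIV" and dB': "int_dsum B0' B1' UNIV" using Z by auto
  have dAs': "int_dsum A1' A0' UNIV" and dBs': "int_dsum B1' B0' UNIV" using dA' dB' int_dsum_sym by auto
  obtain s where s: "is_hom s" "\<And>b. s b \<in> A1" "\<And>b. d (s b) = proj B1 B0 b" "\<And>a. s (d a) = proj A1 A0 a"
    using dec_section[OF hd xin] by blast
  obtain s' where s': "is_hom s'" "\<And>b. s' b \<in> A1'" "\<And>b. d (s' b) = proj B1' B0' b"
    "\<And>a. s' (d a) = proj A1' A0' a"
    using dec_section[OF hd zin] by blast
  note hpA0 = proj_hom[OF sA0 sA1 dA] and hpA1 = proj_hom[OF sA1 sA0 dAs]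
  note hpA0' = proj_hom[OF sA0' sA1' dA'] and hpA1' = proj_hom[OF sA1' sA0' dAs']
  note hpB0 = proj_hom[OF sB0 sB1 dB] and hpB1 = proj_hom[OF sB1 sB0 dBs]
  note hpB0' = proj_hom[OF sB0' sB1' dB'] and hpB1' = proj_hom[OF sB1' sB0' dBs']
  define f where "f b = - (s' (proj B0 B1 b) + proj A0' A1' (s b))" for b
  have hf: "is_hom f" unfolding is_hom_def
  proof (intro allI)
    fix b c
    have 1: "s' (proj B0 B1 (b + c)) = s' (proj B0 B1 b) + s' (proj B0 B1 c)"
      using hom_add[OF hpB0] hom_add[OF s(1)] hom_add[OF s'(1)] by simp
    have 2: "proj A0' A1' (s (b + c)) = proj A0' A1' (s b) + proj A0' A1' (s c)"
      using hom_add[OF hpA0'] hom_add[OF s(1)] by simp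
    show "f (b + c) = f b + f c" unfolding f_def 1 2 by (simp add: algebra_simps)
  qed
  define \<alpha> where "\<alpha> a = a + f (d a)" for a
  define \<beta> where "\<beta> b = b + d (f b)" for b
  have \<alpha>form: "\<alpha> a = proj A0' A1' (proj A0 A1 a) + proj A1' A0' (proj A1 A0 a)" for a
  proof -
    have e1: "proj B0 B1 (d a) = d (proj A0 A1 a)" using dec_comm(1)[OF hd xin] by simp
    have fd: "f (d a) = - (proj A1' A0' (proj A0 A1 a) + proj A0' A1' (proj A1 A0 a))"
      unfolding f_def e1 s'(4) s(4) by simp
    have a1: "proj A0 A1 a + proj A1 A0 a = a" by (rule proj_sum[OF sA0 sA1 dA])
    have a2: "proj A0' A1' (proj A0 A1 a) + proj A1' A0' (proj A0 A1 a) = proj A0 A1 a"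
      by (rule proj_sum[OF sA0' sA1' dA'])
    have a3: "proj A0' A1' (proj A1 A0 a) + proj A1' A0' (proj A1 A0 a) = proj A1 A0 a"
      by (rule proj_sum[OF sA0' sA1' dA'])
    have "\<alpha> a = (proj A0 A1 a + proj A1 A0 a) + f (d a)" unfolding \<alpha>_def a1 ..
    also have "\<dots> = proj A0' A1' (proj A0 A1 a) + proj A1' A0' (proj A1 A0 a)"
      unfolding fd by (rule lin4[OF a2[symmetric] a3[symmetric]])
    finally show ?thesis .
  qed
  have \<beta>form: "\<beta> b = proj B0' B1' (proj B0 B1 b) + proj B1' B0' (proj B1 B0 b)" for b
  proof -
    have e1: "d (proj A0' A1' (s b)) = proj B0' B1' (proj B1 B0 b)"
      using dec_comm(1)[OF hd zin] s(3) by simp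
    have df: "d (f b) = - (proj B1' B0' (proj B0 B1 b) + proj B0' B1' (proj B1 B0 b))"
      unfolding f_def hom_uminus[OF hd] hom_add[OF hd] e1 s'(3) by simp
    have a1: "proj B0 B1 b + proj B1 B0 b = b" by (rule proj_sum[OF sB0 sB1 dB])
    have a2: "proj B0' B1' (proj B0 B1 b) + proj B1' B0' (proj B0 B1 b) = proj B0 B1 b"
      by (rule proj_sum[OF sB0' sB1' dB'])
    have a3: "proj B0' B1' (proj B1 B0 b) + proj B1' B0' (proj B1 B0 b) = proj B1 B0 b"
      by (rule proj_sum[OF sB0' sB1' dB'])
    have "\<beta> b = (proj B0 B1 b + proj B1 B0 b) + d (f b)" unfolding \<beta>_def a1 ..
    also have "\<dots> = proj B0' B1' (proj B0 B1 b) + proj B1' B0' (proj B1 B0 b)"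
      unfolding df by (rule lin4[OF a2[symmetric] a3[symmetric]])
    finally show ?thesis .
  qed
  have h\<alpha>: "is_hom \<alpha>" unfolding is_hom_def
  proof (intro allI)
    fix u v
    have "f (d (u + v)) = f (d u) + f (d v)" using hom_add[OF hd] hom_add[OF hf] by simp
    then show "\<alpha> (u + v) = \<alpha> u + \<alpha> v" unfolding \<alpha>_def by (simp add: algebra_simps)
  qed
  have ker\<alpha>: "a = 0" if "\<alpha> a = 0" for a
  proof -
    define u where "u = proj A0' A1' (proj A0 A1 a)"
    define v where "v = proj A1' A0' (proj A1 A0 a)"
    have uA: "u \<in> A0'" unfolding u_def using proj_prop[OF sA0' sA1' dA'] by blast
    have vA: "v \<in> A1'" unfolding v_def using proj_prop[OF sA1' sA0' dAs'] by blast
    have "u + v = 0" using that \<alpha>form u_def v_def by simp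
    then have "u = - v" by (simp add: eq_neg_iff_add_eq_0)
    then have "u \<in> A1'" using vA subgrp_uminus[OF sA1'] by simp
    then have u0: "u = 0" using uA int_dsum_inter[OF dA'] by blast
    then have v0: "v = 0" using \<open>u + v = 0\<close> by simp
    have p0: "proj A0 A1 a = proj A1' A0' (proj A0 A1 a)"
      using proj_sum[OF sA0' sA1' dA', of "proj A0 A1 a"] u0 u_def by simp
    have "proj A0 A1 a \<in> A1'" by (subst p0) (use proj_prop[OF sA1' sA0' dAs'] in blast)
    moreover have "proj A0 A1 a \<in> A0" using proj_prop[OF sA0 sA1 dA] by blast
    ultimately have z0: "proj A0 A1 a = 0" using lemF[OF hd x0 zin] by blast
    have p1: "proj A1 A0 a = proj A0' A1' (proj A1 A0 a)"
      using proj_sum[OF sA0' sA1' dA', of "proj A1 A0 a"] v0 v_def by simp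
    have "proj A1 A0 a \<in> A0'" by (subst p1) (use proj_prop[OF sA0' sA1' dA'] in blast)
    moreover have "proj A1 A0 a \<in> A1" using proj_prop[OF sA1 sA0 dAs] by blast
    ultimately have z1: "proj A1 A0 a = 0" using lemF[OF hd zmax xin] by blast
    show "a = 0" using proj_sum[OF sA0 sA1 dA, of a] z0 z1 by simp
  qed
  have b\<alpha>: "bij \<alpha>"
  proof (rule finite_inj_bij)
    have "subgrp (UNIV :: 'a set)" by (simp add: subgrp_def)
    then show "inj \<alpha>" using hom_inj_on[OF h\<alpha>] ker\<alpha> by blast
  qed
  define ia where "ia = inv \<alpha>"
  have ia1: "\<alpha> (ia y) = y" for y unfolding ia_def using b\<alpha> by (simp add: bij_is_surj surj_f_inv_f)
  have ia2: "ia (\<alpha> y) = y" for y unfolding ia_def using b\<alpha> by (simp add: bij_is_inj inv_f_f)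
  have hia: "is_hom ia" unfolding is_hom_def
  proof (intro allI)
    fix u v
    have "\<alpha> (ia u + ia v) = u + v" using hom_add[OF h\<alpha>] ia1 by simp
    then have "ia (\<alpha> (ia u + ia v)) = ia (u + v)" by simp
    then show "ia (u + v) = ia u + ia v" using ia2 by simp
  qed
  define g where "g b = - ia (f b)" for b
  have hg: "is_hom g" unfolding is_hom_def g_def using hom_add[OF hia] hom_add[OF hf] by simp
  have g1: "g b + f b + f (d (g b)) = 0" for b
  proof -
    define y where "y = ia (f b)"
    have ay: "y + f (d y) = f b" using ia1[of "f b"] unfolding y_def \<alpha>_def by simp
    have "f (d (g b)) = - f (d y)" unfolding g_def y_def[symmetric]
      using hom_uminus[OF hd] hom_uminus[OF hf] by simp
    then show ?thesis unfolding g_def y_def[symmetric] using ay by (simp add: algebra_simps)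
  qed
  have g2: "f b + g b + g (d (f b)) = 0" for b
  proof -
    have "ia (f b) + ia (f (d (f b))) = ia (\<alpha> (f b))" unfolding \<alpha>_def using hom_add[OF hia] by simp
    then have "ia (f b) + ia (f (d (f b))) = f b" using ia2 by simp
    then show ?thesis unfolding g_def by (simp add: algebra_simps)
  qed
  have qU: "(1, f) \<in> Ustar d"
  proof -
    have "qmult d (1, f) (1, g) = qone"
      unfolding qmult_def qone_def using g1 by (simp add: zsmul_1)
    moreover have "qmult d (1, g) (1, f) = qone"
      unfolding qmult_def qone_def using g2 by (simp add: zsmul_1)
    moreover have "(1::int, g) \<in> Q_carrier" "(1::int, f) \<in> Q_carrier"
      using hg hf by (simp_all add: Q_carrier_def)
    ultimately show ?thesis unfolding Ustar_def by auto
  qed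
  have b\<beta>: "bij \<beta>" using ustar_bij(4)[OF hd qU] unfolding \<beta>_def by simp
  have h\<beta>: "is_hom \<beta>" unfolding is_hom_def
  proof (intro allI)
    fix u v
    have "d (f (u + v)) = d (f u) + d (f v)" using hom_add[OF hd] hom_add[OF hf] by simp
    then show "\<beta> (u + v) = \<beta> u + \<beta> v" unfolding \<beta>_def by (simp add: algebra_simps)
  qed
  have ae: "act d (1, f) ((A0,B0),(A1,B1)) = ((\<alpha> ` A0, \<beta> ` B0), (\<alpha> ` A1, \<beta> ` B1))"
    using act_eq[of d "(1, f)"] unfolding \<alpha>_def \<beta>_def by simp
  have iA0: "\<alpha> ` A0 \<subseteq> A0'"
  proof
    fix w assume "w \<in> \<alpha> ` A0"
    then obtain a where a: "a \<in> A0" "w = \<alpha> a" by blast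
    have "w = proj A0' A1' a + proj A1' A0' 0"
      using a \<alpha>form proj_id[OF sA0 sA1 dA] proj_zero[OF sA1 sA0 dAs] by simp
    then show "w \<in> A0'" using hom_0[OF hpA1'] proj_prop[OF sA0' sA1' dA'] by simp
  qed
  have iA1: "\<alpha> ` A1 \<subseteq> A1'"
  proof
    fix w assume "w \<in> \<alpha> ` A1"
    then obtain a where a: "a \<in> A1" "w = \<alpha> a" by blast
    have "w = proj A0' A1' 0 + proj A1' A0' a"
      using a \<alpha>form proj_id[OF sA1 sA0 dAs] proj_zero[OF sA0 sA1 dA] by simp
    then show "w \<in> A1'" using hom_0[OF hpA0'] proj_prop[OF sA1' sA0' dAs'] by simp
  qed
  have iB0: "\<beta> ` B0 \<subseteq> B0'"
  proof
    fix w assume "w \<in> \<beta> ` B0"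
    then obtain a where a: "a \<in> B0" "w = \<beta> a" by blast
    have "w = proj B0' B1' a + proj B1' B0' 0"
      using a \<beta>form proj_id[OF sB0 sB1 dB] proj_zero[OF sB1 sB0 dBs] by simp
    then show "w \<in> B0'" using hom_0[OF hpB1'] proj_prop[OF sB0' sB1' dB'] by simp
  qed
  have iB1: "\<beta> ` B1 \<subseteq> B1'"
  proof
    fix w assume "w \<in> \<beta> ` B1"
    then obtain a where a: "a \<in> B1" "w = \<beta> a" by blast
    have "w = proj B0' B1' 0 + proj B1' B0' a"
      using a \<beta>form proj_id[OF sB1 sB0 dBs] proj_zero[OF sB0 sB1 dB] by simp
    then show "w \<in> B1'" using hom_0[OF hpB0'] proj_prop[OF sB1' sB0' dBs'] by simp
  qed
  note EA = dsum_image_eq[OF h\<alpha> b\<alpha> sA0' sA1' iA0 iA1 dA dA']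
  note EB = dsum_image_eq[OF h\<beta> b\<beta> sB0' sB1' iB0 iB1 dB dB']
  have "act d (1, f) ((A0,B0),(A1,B1)) = ((A0',B0'),(A1',B1'))" unfolding ae EA EB ..
  then show ?thesis using qU by blast
qed



theorem proposition4p8:
  fixes d :: "'a::{ab_group_add, finite} \<Rightarrow> 'b::{ab_group_add, finite}"
  assumes "is_hom d"
  shows "\<exists>x \<in> Dec_I d. Dec_I_max d = (\<lambda>q. act d q x) ` Ustar d"
proof -
  note hd = assms
  have fin: "finite (Dec_I d)" by (rule finite_subset[OF subset_UNIV]) simp
  have su: "subgrp (UNIV :: 'a set)" "subgrp (UNIV :: 'b set)" by (simp_all add: subgrp_def)
  have s0: "subgrp ({0} :: 'a set)" "subgrp ({0} :: 'b set)" by (simp_all add: subgrp_def)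
  have ds0a: "int_dsum (UNIV :: 'a set) {0} UNIV" unfolding int_dsum_def by auto
  have ds0b: "int_dsum (UNIV :: 'b set) {0} UNIV" unfolding int_dsum_def by auto
  have bj0: "bij_betw d {0} {0}" unfolding bij_betw_def using hom_0[OF hd] by simp
  have x00: "((UNIV, UNIV), ({0}, {0})) \<in> Dec_I d"
    unfolding DecI_unfold using su s0 ds0a ds0b bj0 hom_0[OF hd] by simp
  define c where "c x = card (fst (snd x))" for x :: "('a set \<times> 'b set) \<times> ('a set \<times> 'b set)"
  define M where "M = Max (c ` Dec_I d)"
  have "M \<in> c ` Dec_I d" unfolding M_def using fin x00 by (intro Max_in) auto
  then obtain x0 where x0: "x0 \<in> Dec_I d" "c x0 = M" by blast
  have bound: "\<forall>y\<in>Dec_I d. c y \<le> M" unfolding M_def using fin by simp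
  obtain A0 B0 A1 B1 where x0eq: "x0 = ((A0,B0),(A1,B1))" by (metis prod.collapse)
  have x0max: "((A0,B0),(A1,B1)) \<in> Dec_I_max d"
    using card_max_is_max[OF hd, of A0 B0 A1 B1] x0 bound x0eq c_def by simp
  show ?thesis
  proof (rule bexI[OF _ x0(1)])
    show "Dec_I_max d = (\<lambda>q. act d q x0) ` Ustar d"
    proof (intro equalityI subsetI)
      fix z assume zmax: "z \<in> Dec_I_max d"
      obtain A0' B0' A1' B1' where zeq: "z = ((A0',B0'),(A1',B1'))" by (metis prod.collapse)
      obtain q where q: "q \<in> Ustar d" "act d q ((A0,B0),(A1,B1)) = ((A0',B0'),(A1',B1'))"
        using main_orbit[OF hd x0max zmax[unfolded zeq]] by blast
      have "z = act d q x0" using q(2) zeq x0eq by simp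
      then show "z \<in> (\<lambda>q. act d q x0) ` Ustar d" using q(1) by (rule image_eqI)
    next
      fix z assume "z \<in> (\<lambda>q. act d q x0) ` Ustar d"
      then obtain q where q: "q \<in> Ustar d" "z = act d q x0" by blast
      have zin: "z \<in> Dec_I d" using act_in(1)[OF hd q(1) x0(1)[unfolded x0eq]] q(2) x0eq by simp
      have cz: "c z = M" using act_in(2)[OF hd q(1) x0(1)[unfolded x0eq]] q(2) x0eq x0(2) c_def by simp
      obtain A0' B0' A1' B1' where zeq: "z = ((A0',B0'),(A1',B1'))" by (metis prod.collapse)
      have "\<forall>y\<in>Dec_I d. card (fst (snd y)) \<le> card A1'" using bound cz zeq c_def by simp
      then show "z \<in> Dec_I_max d" using card_max_is_max[OF hd, of A0' B0' A1' B1'] zin zeq by simp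
    qed
  qed
qed


end
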